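(* Let $V$ be a countable set, $\Lambda\subseteq\mathbb N_0$, and let $E$ be the set of unordered pairs $\{i,j\}$ of distinct elements of $V$ (edges of the complete graph on $V$). Consider a configuration process with generator $\mathcal L=\sum_{\{i,j\}\in E}\mathcal L_{i,j}$, where $$\mathcal L_{i,j}f(\eta)=c_{i,j}(\eta_i,\eta_j)[f(\eta^{i,j})-f(\eta)]+c_{j,i}(\eta_j,\eta_i)[f(\eta^{j,i})-f(\eta)],$$ with $\eta^{i,j}:=\eta-\delta_i+\delta_j$ and rate functions $c_{i,j}:\Lambda\times\Lambda\to\mathbb R$. Then $[\mathcal L_{i,j},\mathcal A]=0$ for all $\{i,j\}\in E$ if and only if there exist $\theta:E\to\mathbb R$ and $\alpha:V^2\to\mathbb R$ such that $$c_{i,j}(\kappa,m)=\kappa\big(\theta(\{i,j\})\,m+\alpha(i,j)\big)\qquad\text{for all } i\neq j,\ \kappa,m\in\Lambda.$$ As a consequence, the configuration process with rates of this form is consistent, i.e. $[\mathcal L,\mathcal A]=0$.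
   Context: Configurations are $\eta\in\Lambda^V$ with finitely many particles; $\delta_z$ is the configuration with a single particle at $z$. The annihilation operator acts on functions $f$ of configurations by $\mathcal Af(\eta)=\sum_{x\in V}a_xf(\eta)$, $a_xf(\eta)=\eta_xf(\eta-\delta_x)$ if $\eta_x\ge1$ and $0$ if $\eta_x=0$. $[\cdot,\cdot]$ is the commutator. *)

theory Defs
  imports Complex_Main "HOL-Library.Countable"
begin

text \<open>Configurations are represented as integer vectors so that shifted vectors
  such as eta - delta_i + delta_j are always defined; test functions f are
  real-valued functions on all integer vectors.\<close>

definition delta :: "'v \<Rightarrow> 'v \<Rightarrow> int" where
  "delta z = (\<lambda>x. if x = z then 1 else 0)"

definition is_config :: "nat set \<Rightarrow> ('v \<Rightarrow> int) \<Rightarrow> bool" where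
  "is_config \<Lambda> \<eta> \<longleftrightarrow> (\<forall>x. 0 \<le> \<eta> x \<and> nat (\<eta> x) \<in> \<Lambda>) \<and> finite {x. \<eta> x \<noteq> 0}"

type_synonym 'v obs = "('v \<Rightarrow> int) \<Rightarrow> real"
type_synonym 'v oper = "'v obs \<Rightarrow> 'v obs"

definition annih :: "'v \<Rightarrow> 'v oper" where
  "annih x f \<eta> = (if 1 \<le> \<eta> x then of_int (\<eta> x) * f (\<lambda>y. \<eta> y - delta x y) else 0)"

text \<open>Annihilation operator A = sum over x in V of a_x (only sites with
  eta_x >= 1 contribute, a finite set for finitely many particles).\<close>
definition Aop :: "'v oper" where
  "Aop f \<eta> = (\<Sum>x\<in>{x. 1 \<le> \<eta> x}. annih x f \<eta>)"

definition jump :: "'v \<Rightarrow> 'v \<Rightarrow> ('v \<Rightarrow> int) \<Rightarrow> ('v \<Rightarrow> int)" where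
  "jump i j \<eta> = (\<lambda>y. \<eta> y - delta i y + delta j y)"

text \<open>Edge generator L_{i,j} with rate functions c i j :: Lambda x Lambda -> R
  (given as total functions on nat x nat; only values on Lambda x Lambda matter).\<close>
definition Lij :: "('v \<Rightarrow> 'v \<Rightarrow> nat \<Rightarrow> nat \<Rightarrow> real) \<Rightarrow> 'v \<Rightarrow> 'v \<Rightarrow> 'v oper" where
  "Lij c i j f \<eta> =
     c i j (nat (\<eta> i)) (nat (\<eta> j)) * (f (jump i j \<eta>) - f \<eta>)
   + c j i (nat (\<eta> j)) (nat (\<eta> i)) * (f (jump j i \<eta>) - f \<eta>)"

definition Ledge :: "('v \<Rightarrow> 'v \<Rightarrow> nat \<Rightarrow> nat \<Rightarrow> real) \<Rightarrow> 'v set \<Rightarrow> 'v oper" where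
  "Ledge c e = (let p = (SOME p. fst p \<noteq> snd p \<and> e = {fst p, snd p}) in Lij c (fst p) (snd p))"

definition edges :: "'v set set" where
  "edges = {{i, j} | i j. i \<noteq> j}"

definition Lsum :: "('v \<Rightarrow> 'v \<Rightarrow> nat \<Rightarrow> nat \<Rightarrow> real) \<Rightarrow> 'v set set \<Rightarrow> 'v oper" where
  "Lsum c F f \<eta> = (\<Sum>e\<in>F. Ledge c e f \<eta>)"

definition commutes :: "nat set \<Rightarrow> 'v oper \<Rightarrow> 'v oper \<Rightarrow> bool" where
  "commutes \<Lambda> P Q \<longleftrightarrow> (\<forall>f \<eta>. is_config \<Lambda> \<eta> \<longrightarrow> P (Q f) \<eta> - Q (P f) \<eta> = 0)"

end

theory Submission
  imports Defs
begin

lemma Aop_T: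
  assumes "finite T" "{x. 1 \<le> z x} \<subseteq> T"
  shows "Aop f z = (\<Sum>x\<in>T. annih x f z)"
  unfolding Aop_def
  by (rule sum.mono_neutral_left) (use assms in \<open>auto simp: annih_def\<close>)

lemma comm_formula:
  fixes \<eta> :: "'v \<Rightarrow> int"
  assumes fin: "finite {x. \<eta> x \<noteq> 0}" and ij: "i \<noteq> j"
    and a: "\<eta> i = int a" and b: "\<eta> j = int b"
  defines "P1 \<equiv> (\<lambda>y. \<eta> y - delta i y)"
    and "P2 \<equiv> (\<lambda>y. \<eta> y - delta j y)"
    and "P3 \<equiv> (\<lambda>y. \<eta> y - delta i y - delta i y + delta j y)"
    and "P4 \<equiv> (\<lambda>y. \<eta> y - delta j y - delta j y + delta i y)"
  shows "Lij c i j (Aop f) \<eta> - Aop (Lij c i j f) \<eta> =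
     c i j a b * ((if 2 \<le> a then real (a - 1) * f P3 else 0) - (if 1 \<le> a then real a * f P1 else 0))
   + c j i b a * (real (a + 1) * f P2 - (if 1 \<le> a then real a * f P1 else 0))
   - (if 1 \<le> a then real a * (c i j (a - 1) b * (f P3 - f P1) + c j i b (a - 1) * (f P2 - f P1)) else 0)
   + c i j a b * (real (b + 1) * f P1 - (if 1 \<le> b then real b * f P2 else 0))
   + c j i b a * ((if 2 \<le> b then real (b - 1) * f P4 else 0) - (if 1 \<le> b then real b * f P2 else 0))
   - (if 1 \<le> b then real b * (c i j a (b - 1) * (f P1 - f P2) + c j i (b - 1) a * (f P4 - f P2)) else 0)" (is "_ = ?rhs")
proof -
  define T where "T = {x. \<eta> x \<noteq> 0} \<union> {i, j}"
  have fT: "finite T" using fin by (simp add: T_def)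
  have sub: "{x. 1 \<le> z x} \<subseteq> T" if "\<And>x. x \<notin> {i, j} \<Longrightarrow> z x = \<eta> x" for z :: "'v \<Rightarrow> int"
    using that by (force simp: T_def)
  define C where "C = c i j a b"
  define D where "D = c j i b a"
  define L where "L = Lij c i j f"
  define \<Delta> where "\<Delta> x = C * (annih x f (jump i j \<eta>) - annih x f \<eta>) + D * (annih x f (jump j i \<eta>) - annih x f \<eta>) - annih x L \<eta>" for x
  have AL: "Lij c i j (Aop f) \<eta> = C * (Aop f (jump i j \<eta>) - Aop f \<eta>) + D * (Aop f (jump j i \<eta>) - Aop f \<eta>)"
    by (simp add: Lij_def C_def D_def a b)
  have "Lij c i j (Aop f) \<eta> - Aop (Lij c i j f) \<eta> = (\<Sum>x\<in>T. \<Delta> x)"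
    unfolding AL L_def[symmetric] \<Delta>_def
    apply (subst (1 2 3 4 5) Aop_T[OF fT])
    apply (rule sub; auto simp: jump_def delta_def)+
    apply (simp add: sum_subtractf sum.distrib sum_distrib_left right_diff_distrib)
    done
  also have "\<dots> = \<Delta> i + \<Delta> j + (\<Sum>x\<in>T - {i, j}. \<Delta> x)"
  proof -
    have "i \<in> T" "j \<in> T - {i}" using ij by (auto simp: T_def)
    then have "(\<Sum>x\<in>T. \<Delta> x) = \<Delta> i + (\<Delta> j + (\<Sum>x\<in>T - {i} - {j}. \<Delta> x))"
      using fT by (simp add: sum.remove[of T i] sum.remove[of "T - {i}" j])
    then show ?thesis by (simp add: Diff_insert2[symmetric])
  qed
  also have "(\<Sum>x\<in>T - {i, j}. \<Delta> x) = 0"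
  proof (rule sum.neutral, rule ballI)
    fix x assume "x \<in> T - {i, j}"
    then have x: "x \<noteq> i" "x \<noteq> j" by auto
    have e1: "(\<lambda>y. jump i j \<eta> y - delta x y) = jump i j (\<lambda>y. \<eta> y - delta x y)"
      by (auto simp: jump_def)
    have e2: "(\<lambda>y. jump j i \<eta> y - delta x y) = jump j i (\<lambda>y. \<eta> y - delta x y)"
      by (auto simp: jump_def)
    show "\<Delta> x = 0"
    proof -
      have j1: "jump i j \<eta> x = \<eta> x" "jump j i \<eta> x = \<eta> x"
        using x by (auto simp: jump_def delta_def)
      have d1: "delta x i = 0" "delta x j = 0" using x by (auto simp: delta_def)
      show ?thesis
        unfolding \<Delta>_def annih_def L_def
        by (simp add: e1 e2 j1 Lij_def d1 C_def D_def a b algebra_simps)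
    qed
  qed
  finally have main: "Lij c i j (Aop f) \<eta> - Aop (Lij c i j f) \<eta> = \<Delta> i + \<Delta> j" by simp
  have ji: "j \<noteq> i" using ij by simp
  have jv: "jump i j \<eta> i = int a - 1" "jump i j \<eta> j = int b + 1"
     "jump j i \<eta> i = int a + 1" "jump j i \<eta> j = int b - 1"
    using ij by (auto simp: jump_def delta_def a b)
  have pv: "P1 i = int a - 1" "P1 j = int b" "P2 i = int a" "P2 j = int b - 1"
    using ij by (auto simp: P1_def P2_def delta_def a b)
  have jp: "(\<lambda>y. jump i j \<eta> y - delta i y) = P3" "(\<lambda>y. jump i j \<eta> y - delta j y) = P1"
     "(\<lambda>y. jump j i \<eta> y - delta i y) = P2" "(\<lambda>y. jump j i \<eta> y - delta j y) = P4"
     "jump i j P1 = P3" "jump j i P1 = P2" "jump i j P2 = P1" "jump j i P2 = P4"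
    by (auto simp: jump_def P1_def P2_def P3_def P4_def)
  have nn: "nat (int a - 1) = a - 1" "nat (int b - 1) = b - 1" "nat (int a) = a" "nat (int b) = b"
     "nat (int a + 1) = a + 1" "nat (int b + 1) = b + 1" by auto
  have le: "(1 \<le> int a - 1) = (2 \<le> a)" "(1 \<le> int b - 1) = (2 \<le> b)"
     "(1 \<le> int a) = (1 \<le> a)" "(1 \<le> int b) = (1 \<le> b)" by auto
  have ri: "2 \<le> a \<Longrightarrow> real_of_int (int a - 1) = real (a - 1)"
     "2 \<le> b \<Longrightarrow> real_of_int (int b - 1) = real (b - 1)"
     "real_of_int (int a + 1) = real (a + 1)" "real_of_int (int b + 1) = real (b + 1)"
    by auto
  have "\<Delta> i + \<Delta> j = ?rhs"
    unfolding \<Delta>_def annih_def L_def C_def D_def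
    using ij ji
    by (simp add: jv jp a b nn le ri P1_def[symmetric] P2_def[symmetric] Lij_def pv add.commute)
  then show ?thesis using main by simp
qed

lemma backward:
  assumes L0: "0 \<in> \<Lambda>" and Ld: "\<forall>k\<in>\<Lambda>. \<forall>l\<le>k. l \<in> \<Lambda>"
    and form: "\<forall>i j \<kappa> m. i \<noteq> j \<longrightarrow> \<kappa> \<in> \<Lambda> \<longrightarrow> m \<in> \<Lambda> \<longrightarrow>
              c i j \<kappa> m = real \<kappa> * (\<theta> {i, j} * real m + \<alpha> i j)"
    and ij: "i \<noteq> j"
  shows "commutes \<Lambda> (Lij c i j) Aop"
  unfolding commutes_def
proof (intro allI impI)
  fix f and \<eta> :: "'a \<Rightarrow> int"
  assume cf: "is_config \<Lambda> \<eta>"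
  define a where "a = nat (\<eta> i)"
  define b where "b = nat (\<eta> j)"
  have a: "\<eta> i = int a" and b: "\<eta> j = int b" and aL: "a \<in> \<Lambda>" and bL: "b \<in> \<Lambda>"
    and fin: "finite {x. \<eta> x \<noteq> 0}"
    using cf by (auto simp: is_config_def a_def b_def)
  have a1: "a - 1 \<in> \<Lambda>" and b1: "b - 1 \<in> \<Lambda>" using Ld aL bL by auto
  have ji: "j \<noteq> i" using ij by simp
  have sym: "{j, i} = {i, j}" by auto
  note F = form[rule_format, OF ij] form[rule_format, OF ji, unfolded sym]
  show "Lij c i j (Aop f) \<eta> - Aop (Lij c i j f) \<eta> = 0"
  proof -
    have e: "c i j a b = real a * (\<theta> {i, j} * real b + \<alpha> i j)"
       "c j i b a = real b * (\<theta> {i, j} * real a + \<alpha> j i)"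
       "c i j (a - 1) b = real (a - 1) * (\<theta> {i, j} * real b + \<alpha> i j)"
       "c j i b (a - 1) = real b * (\<theta> {i, j} * real (a - 1) + \<alpha> j i)"
       "c i j a (b - 1) = real a * (\<theta> {i, j} * real (b - 1) + \<alpha> i j)"
       "c j i (b - 1) a = real (b - 1) * (\<theta> {i, j} * real a + \<alpha> j i)"
      using F aL bL a1 b1 by auto
    show ?thesis
      unfolding comm_formula[OF fin ij a b] e
      by (cases "a = 0"; cases "a = 1"; cases "b = 0"; cases "b = 1")
        (simp_all add: algebra_simps of_nat_diff)
  qed
qed

lemma coeffs:
  assumes com: "commutes \<Lambda> (Lij c i j) Aop" and ij: "i \<noteq> j"
    and L0: "0 \<in> \<Lambda>" and aL: "a \<in> \<Lambda>" and bL: "b \<in> \<Lambda>"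
  shows "(if 2 \<le> a then real (a - 1) * c i j a b else 0) - (if 1 \<le> a then real a * c i j (a - 1) b else 0) = 0"
    and "c i j a b * real (b + 1) - c i j a b * (if 1 \<le> a then real a else 0) - c j i b a * (if 1 \<le> a then real a else 0)
         + (if 1 \<le> a then real a * (c i j (a - 1) b + c j i b (a - 1)) else 0)
         - (if 1 \<le> b then real b * c i j a (b - 1) else 0) = 0"
proof -
  define \<eta> :: "'a \<Rightarrow> int" where "\<eta> = (\<lambda>y. if y = i then int a else if y = j then int b else 0)"
  have a: "\<eta> i = int a" and b: "\<eta> j = int b" using ij by (auto simp: \<eta>_def)
  have fin: "finite {x. \<eta> x \<noteq> 0}"
    by (rule finite_subset[of _ "{i, j}"]) (auto simp: \<eta>_def)
  have cf: "is_config \<Lambda> \<eta>" using fin L0 aL bL by (auto simp: is_config_def \<eta>_def)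
  define P1 where "P1 = (\<lambda>y. \<eta> y - delta i y)"
  define P2 where "P2 = (\<lambda>y. \<eta> y - delta j y)"
  define P3 where "P3 = (\<lambda>y. \<eta> y - delta i y - delta i y + delta j y)"
  define P4 where "P4 = (\<lambda>y. \<eta> y - delta j y - delta j y + delta i y)"
  have v: "P1 i = int a - 1" "P2 i = int a" "P3 i = int a - 2" "P4 i = int a + 1"
    using ij by (auto simp: P1_def P2_def P3_def P4_def delta_def a)
  have d: "P1 \<noteq> P2" "P1 \<noteq> P3" "P1 \<noteq> P4" "P2 \<noteq> P3" "P2 \<noteq> P4" "P3 \<noteq> P4"
    by (rule notI, drule fun_cong[of _ _ i], simp add: v)+
  have H: "c i j a b * ((if 2 \<le> a then real (a - 1) * f P3 else 0) - (if 1 \<le> a then real a * f P1 else 0))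
   + c j i b a * (real (a + 1) * f P2 - (if 1 \<le> a then real a * f P1 else 0))
   - (if 1 \<le> a then real a * (c i j (a - 1) b * (f P3 - f P1) + c j i b (a - 1) * (f P2 - f P1)) else 0)
   + c i j a b * (real (b + 1) * f P1 - (if 1 \<le> b then real b * f P2 else 0))
   + c j i b a * ((if 2 \<le> b then real (b - 1) * f P4 else 0) - (if 1 \<le> b then real b * f P2 else 0))
   - (if 1 \<le> b then real b * (c i j a (b - 1) * (f P1 - f P2) + c j i (b - 1) a * (f P4 - f P2)) else 0) = 0" for f
    using com cf comm_formula[OF fin ij a b, of c f] unfolding commutes_def P1_def P2_def P3_def P4_def
    by metis
  show "(if 2 \<le> a then real (a - 1) * c i j a b else 0) - (if 1 \<le> a then real a * c i j (a - 1) b else 0) = 0"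
    using H[of "\<lambda>z. if z = P3 then 1 else 0", simplified d d[THEN not_sym] if_False if_True]
    apply (simp split: if_splits)
    apply (auto simp: algebra_simps of_nat_diff)
    done
  show "c i j a b * real (b + 1) - c i j a b * (if 1 \<le> a then real a else 0) - c j i b a * (if 1 \<le> a then real a else 0)
         + (if 1 \<le> a then real a * (c i j (a - 1) b + c j i b (a - 1)) else 0)
         - (if 1 \<le> b then real b * c i j a (b - 1) else 0) = 0"
    using H[of "\<lambda>z. if z = P1 then 1 else 0", simplified d d[THEN not_sym] if_False if_True]
    apply (simp split: if_splits)
    apply (auto simp: algebra_simps of_nat_diff)
    done
qed

lemma forward:
  assumes com: "\<forall>i j. i \<noteq> j \<longrightarrow> commutes \<Lambda> (Lij c i j) Aop"
    and L0: "0 \<in> \<Lambda>" and Ld: "\<forall>k\<in>\<Lambda>. \<forall>l\<le>k. l \<in> \<Lambda>"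
  shows "\<exists>(\<theta>::'a set \<Rightarrow> real) (\<alpha>::'a \<Rightarrow> 'a \<Rightarrow> real). \<forall>i j \<kappa> m.
              i \<noteq> j \<longrightarrow> \<kappa> \<in> \<Lambda> \<longrightarrow> m \<in> \<Lambda> \<longrightarrow>
              c i j \<kappa> m = real \<kappa> * (\<theta> {i, j} * real m + \<alpha> i j)"
proof -
  have down: "l \<in> \<Lambda>" if "k \<in> \<Lambda>" "l \<le> k" for k l using Ld that by blast
  note E3 = coeffs(1)[OF com[rule_format] _ L0] and E1 = coeffs(2)[OF com[rule_format] _ L0]
  have c0: "c i j 0 b = 0" if ij: "i \<noteq> j" and bL: "b \<in> \<Lambda>" for i j b
    using bL
  proof (induction b)
    case 0
    then show ?case using E1[OF ij ij L0 L0] by simp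
  next
    case (Suc b)
    have "b \<in> \<Lambda>" using down[OF Suc.prems] by simp
    then have "c i j 0 b = 0" by (rule Suc.IH)
    then show ?case using E1[OF ij ij L0 Suc.prems] by simp
  qed
  have lin: "c i j a b = real a * c i j 1 b" if ij: "i \<noteq> j" and aL: "a \<in> \<Lambda>" and bL: "b \<in> \<Lambda>" for i j a b
    using aL
  proof (induction a)
    case 0
    then show ?case using c0[OF ij bL] by simp
  next
    case (Suc a)
    have aL': "a \<in> \<Lambda>" using down[OF Suc.prems] by simp
    show ?case
    proof (cases "a = 0")
      case True then show ?thesis by simp
    next
      case False
      have "real a * c i j (Suc a) b = real (Suc a) * c i j a b"
        using E3[OF ij ij Suc.prems bL] False by simp
      also have "\<dots> = real (Suc a) * (real a * c i j 1 b)" using Suc.IH[OF aL'] by simp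
      finally have "real a * c i j (Suc a) b = real a * (real (Suc a) * c i j 1 b)" by (simp add: algebra_simps)
      then show ?thesis using False by simp
    qed
  qed
  have step: "c i j 1 b - c i j 1 (b - 1) = c j i 1 1 - c j i 1 0"
    if ij: "i \<noteq> j" and oL: "1 \<in> \<Lambda>" and bL: "b \<in> \<Lambda>" and b1: "1 \<le> b" for i j b
  proof -
    have ji: "j \<noteq> i" using ij by simp
    have e: "c j i b 1 = real b * c j i 1 1" "c j i b 0 = real b * c j i 1 0"
      using lin[OF ji bL oL] lin[OF ji bL L0] by auto
    have "c i j 1 b * real (b + 1) - c i j 1 b - c j i b 1 + (c i j 0 b + c j i b 0)
         - real b * c i j 1 (b - 1) = 0"
      using E1[OF ij ij oL bL] b1 by simp
    then have "real b * (c i j 1 b - c i j 1 (b - 1) - (c j i 1 1 - c j i 1 0)) = 0"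
      using c0[OF ij bL] e by (simp add: algebra_simps)
    then show ?thesis using b1 by simp
  qed
  define t where "t i j = c i j 1 1 - c i j 1 0" for i j
  have tsym: "t i j = t j i" if "i \<noteq> j" "1 \<in> \<Lambda>" for i j
    using step[OF that(1) that(2) that(2)] by (simp add: t_def)
  have g: "c i j 1 m = c i j 1 0 + real m * t j i" if ij: "i \<noteq> j" and oL: "1 \<in> \<Lambda>" and mL: "m \<in> \<Lambda>" for i j m
    using mL
  proof (induction m)
    case 0 then show ?case by simp
  next
    case (Suc m)
    have "m \<in> \<Lambda>" using down[OF Suc.prems] by simp
    then show ?case using Suc.IH step[OF ij oL Suc.prems] by (simp add: t_def algebra_simps)
  qed
  define \<theta> where "\<theta> e = (let p = (SOME p. fst p \<noteq> snd p \<and> e = {fst p, snd p}) in t (fst p) (snd p))" for e :: "'a set"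
  have th: "\<theta> {i, j} = t i j" if ij: "i \<noteq> j" and oL: "1 \<in> \<Lambda>" for i j
  proof -
    define p where "p = (SOME p. fst p \<noteq> snd p \<and> {i, j} = {fst p, snd p})"
    have "fst p \<noteq> snd p \<and> {i, j} = {fst p, snd p}"
      unfolding p_def by (rule someI[of _ "(i, j)"]) (simp add: ij)
    then have "(fst p = i \<and> snd p = j) \<or> (fst p = j \<and> snd p = i)"
      by (auto simp: doubleton_eq_iff)
    then have "t (fst p) (snd p) = t i j" using tsym[OF ij oL] by auto
    then show ?thesis by (simp add: \<theta>_def p_def Let_def)
  qed
  show ?thesis
  proof (intro exI allI impI)
    fix i j :: 'a and \<kappa> m assume ij: "i \<noteq> j" and kL: "\<kappa> \<in> \<Lambda>" and mL: "m \<in> \<Lambda>"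
    show "c i j \<kappa> m = real \<kappa> * (\<theta> {i, j} * real m + c i j 1 0)"
    proof (cases "\<kappa> = 0")
      case True then show ?thesis using c0[OF ij mL] by simp
    next
      case False
      then have oL: "1 \<in> \<Lambda>" using down[OF kL] by simp
      show ?thesis using lin[OF ij kL mL] g[OF ij oL mL] th[OF ij oL] tsym[OF ij oL]
        by (simp add: algebra_simps)
    qed
  qed
qed

lemma Ledge_eq:
  assumes "e \<in> edges"
  obtains i j where "i \<noteq> j" "Ledge c e = Lij c i j"
proof -
  define p where "p = (SOME p. fst p \<noteq> snd p \<and> e = {fst p, snd p})"
  have "\<exists>p. fst p \<noteq> snd p \<and> e = {fst p, snd p}" using assms by (auto simp: edges_def)
  then have "fst p \<noteq> snd p \<and> e = {fst p, snd p}" unfolding p_def by (rule someI_ex)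
  moreover have "Ledge c e = Lij c (fst p) (snd p)" by (simp add: Ledge_def p_def Let_def)
  ultimately show ?thesis using that by blast
qed

lemma lsum:
  assumes com: "\<forall>i j. i \<noteq> j \<longrightarrow> commutes \<Lambda> (Lij c i j) Aop"
    and F: "finite F" "F \<subseteq> edges"
  shows "commutes \<Lambda> (Lsum c F) Aop"
  unfolding commutes_def
proof (intro allI impI)
  fix f and \<eta> :: "'a \<Rightarrow> int"
  assume cf: "is_config \<Lambda> \<eta>"
  have each: "Ledge c e (Aop f) \<eta> - Aop (Ledge c e f) \<eta> = 0" if eF: "e \<in> F" for e
  proof -
    have eE: "e \<in> edges" using eF F by auto
    obtain i j where "i \<noteq> j" "Ledge c e = Lij c i j" using Ledge_eq[of e c] eE by blast
    then show ?thesis using com cf unfolding commutes_def by simp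
  qed
  have an: "annih x (\<lambda>z. \<Sum>e\<in>F. g e z) \<eta> = (\<Sum>e\<in>F. annih x (g e) \<eta>)" for x g
    by (simp add: annih_def sum_distrib_left)
  have "Aop (Lsum c F f) \<eta> = (\<Sum>x\<in>{x. 1 \<le> \<eta> x}. \<Sum>e\<in>F. annih x (Ledge c e f) \<eta>)"
    unfolding Aop_def Lsum_def by (simp add: an)
  also have "\<dots> = (\<Sum>e\<in>F. Aop (Ledge c e f) \<eta>)"
    unfolding Aop_def by (rule sum.swap)
  finally have "Lsum c F (Aop f) \<eta> - Aop (Lsum c F f) \<eta> = (\<Sum>e\<in>F. Ledge c e (Aop f) \<eta> - Aop (Ledge c e f) \<eta>)"
    by (simp add: Lsum_def sum_subtractf)
  also have "\<dots> = 0" using each by simp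
  finally show "Lsum c F (Aop f) \<eta> - Aop (Lsum c F f) \<eta> = 0" .
qed

theorem theorem3p3:
  fixes \<Lambda> :: "nat set"
    and c :: "'v::countable \<Rightarrow> 'v \<Rightarrow> nat \<Rightarrow> nat \<Rightarrow> real"
  assumes "0 \<in> \<Lambda>"
    and "\<forall>k\<in>\<Lambda>. \<forall>l\<le>k. l \<in> \<Lambda>"
  shows "((\<forall>i j. i \<noteq> j \<longrightarrow> commutes \<Lambda> (Lij c i j) Aop) \<longleftrightarrow>
          (\<exists>(\<theta>::'v set \<Rightarrow> real) (\<alpha>::'v \<Rightarrow> 'v \<Rightarrow> real). \<forall>i j \<kappa> m.
              i \<noteq> j \<longrightarrow> \<kappa> \<in> \<Lambda> \<longrightarrow> m \<in> \<Lambda> \<longrightarrow>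
              c i j \<kappa> m = real \<kappa> * (\<theta> {i, j} * real m + \<alpha> i j)))
       \<and> ((\<exists>(\<theta>::'v set \<Rightarrow> real) (\<alpha>::'v \<Rightarrow> 'v \<Rightarrow> real). \<forall>i j \<kappa> m.
              i \<noteq> j \<longrightarrow> \<kappa> \<in> \<Lambda> \<longrightarrow> m \<in> \<Lambda> \<longrightarrow>
              c i j \<kappa> m = real \<kappa> * (\<theta> {i, j} * real m + \<alpha> i j))
          \<longrightarrow> (\<forall>F. finite F \<longrightarrow> F \<subseteq> edges \<longrightarrow> commutes \<Lambda> (Lsum c F) Aop))"
  (is "(?A \<longleftrightarrow> ?B) \<and> _")
proof -
  have bw: "\<forall>i j. i \<noteq> j \<longrightarrow> commutes \<Lambda> (Lij c i j) Aop"
    if ex: "\<exists>(\<theta>::'v set \<Rightarrow> real) (\<alpha>::'v \<Rightarrow> 'v \<Rightarrow> real). \<forall>i j \<kappa> m.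
              i \<noteq> j \<longrightarrow> \<kappa> \<in> \<Lambda> \<longrightarrow> m \<in> \<Lambda> \<longrightarrow>
              c i j \<kappa> m = real \<kappa> * (\<theta> {i, j} * real m + \<alpha> i j)"
  proof -
    obtain \<theta> \<alpha> where h: "\<forall>i j \<kappa> m.
              i \<noteq> j \<longrightarrow> \<kappa> \<in> \<Lambda> \<longrightarrow> m \<in> \<Lambda> \<longrightarrow>
              c i j \<kappa> m = real \<kappa> * (\<theta> {i, j} * real m + \<alpha> i j)" using ex by blast
    show ?thesis using backward[OF assms h] by blast
  qed
  have fw: "\<forall>i j. i \<noteq> j \<longrightarrow> commutes \<Lambda> (Lij c i j) Aop \<Longrightarrow> ?B"
    by (rule forward[OF _ assms])
  show ?thesis
  proof (rule conjI)
    show "?A \<longleftrightarrow> ?B" using fw bw by blast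
  next
    show "?B \<longrightarrow> (\<forall>F. finite F \<longrightarrow> F \<subseteq> edges \<longrightarrow> commutes \<Lambda> (Lsum c F) Aop)"
    proof (intro impI allI)
    fix F :: "'v set set" assume "?B" "finite F" "F \<subseteq> edges"
    then show "commutes \<Lambda> (Lsum c F) Aop" using lsum bw by blast
    qed
  qed
qed

end
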